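(* Let $n\ge 2$ and let $(G(k))_{k\in\mathbb{N}}$ be a sequence of digraphs on $\mathcal{V}=\{1,\dots,n\}$ with knowledge sets evolving by the flooding update described in the context. Let $\psi(k)=n$ for $k\le\lceil n/2\rceil-1$ and $\psi(k)=n-k$ for $k\ge\lceil n/2\rceil$; let $\nu(k)=k+2$ for $k\le\lceil n/2\rceil-1$ and $\nu(k)=n$ for $k\ge\lceil n/2\rceil$; and let $\eta(k)=\min\{\psi(k),\nu(k)\}$. If for every $k\in\{0,1,\dots,n-2\}$ the digraph $G(k)$ contains $\eta(k)(k)$, then $\sum_{i=1}^n|\mathcal{K}_i(n-1)|=n^2$.
   Context: Network: $\mathcal{V}=\{1,\dots,n\}$; node $i$ holds initial data $d_i\in\mathbb{R}$, pairwise distinct. At discrete times $k\in\mathbb{N}$ communication follows digraph $G(k)=(\mathcal{V},\mathcal{E}(k))$; node $i$ sends to $j$ at time $k$ iff $(i,j)\in\mathcal{E}(k)$. Knowledge sets: $\mathcal{K}_i(0)=\{d_i\}$ and $\mathcal{K}_j(k+1)=\mathcal{K}_j(k)\cup\bigcup_{i:(i,j)\in\mathcal{E}(k)}\mathcal{K}_i(k)$. An input-cord to node $i$ at time $k$ is an ordered list $(\mathcal{I}^i_1,\dots,\mathcal{I}^i_m)$ of pairwise distinct nodes of $\mathcal{V}\setminus\{i\}$ with $(\mathcal{I}^i_j,\mathcal{I}^i_{j+1})\in\mathcal{E}(k)$ for $j=1,\dots,m-1$ and $(\mathcal{I}^i_m,i)\in\mathcal{E}(k)$; its cardinality is $m$.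 It is closed if moreover $(i,\mathcal{I}^i_1)\in\mathcal{E}(k)$. For an integer $\chi$, node $i$ is contained in a $\chi(k)$-cycle if it has at time $k$ a closed input-cord of cardinality greater than $\chi-2$; $G(k)$ contains $\chi(k)$ if every node is contained in a $\chi(k)$-cycle. *)

theory Defs
  imports Complex_Main
begin

type_synonym graph_seq = "nat \<Rightarrow> (nat \<times> nat) set"

primrec know :: "graph_seq \<Rightarrow> (nat \<Rightarrow> 'a) \<Rightarrow> nat \<Rightarrow> nat \<Rightarrow> 'a set" where
  "know E d 0 j = {d j}"
| "know E d (Suc k) j = know E d k j \<union> (\<Union>i\<in>{i. (i, j) \<in> E k}. know E d k i)"

definition input_cord :: "nat \<Rightarrow> graph_seq \<Rightarrow> nat \<Rightarrow> nat \<Rightarrow> nat list \<Rightarrow> bool" where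
  "input_cord n E k i cs \<longleftrightarrow>
     cs \<noteq> [] \<and> distinct cs \<and> set cs \<subseteq> {1..n} - {i} \<and>
     (\<forall>j. Suc j < length cs \<longrightarrow> (cs ! j, cs ! Suc j) \<in> E k) \<and>
     (last cs, i) \<in> E k"

definition closed_input_cord :: "nat \<Rightarrow> graph_seq \<Rightarrow> nat \<Rightarrow> nat \<Rightarrow> nat list \<Rightarrow> bool" where
  "closed_input_cord n E k i cs \<longleftrightarrow> input_cord n E k i cs \<and> (i, hd cs) \<in> E k"

definition in_chi_cycle :: "nat \<Rightarrow> graph_seq \<Rightarrow> int \<Rightarrow> nat \<Rightarrow> nat \<Rightarrow> bool" where
  "in_chi_cycle n E chi k i \<longleftrightarrow>
     (\<exists>cs. closed_input_cord n E k i cs \<and> int (length cs) > chi - 2)"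

definition contains_chi :: "nat \<Rightarrow> graph_seq \<Rightarrow> int \<Rightarrow> nat \<Rightarrow> bool" where
  "contains_chi n E chi k \<longleftrightarrow> (\<forall>i\<in>{1..n}. in_chi_cycle n E chi k i)"

text \<open>ceil(n/2) = (n+1) div 2 for natural n.\<close>
definition psi :: "nat \<Rightarrow> nat \<Rightarrow> int" where
  "psi n k = (if k \<le> (n + 1) div 2 - 1 then int n else int n - int k)"

definition nu :: "nat \<Rightarrow> nat \<Rightarrow> int" where
  "nu n k = (if k \<le> (n + 1) div 2 - 1 then int k + 2 else int n)"

definition eta :: "nat \<Rightarrow> nat \<Rightarrow> int" where
  "eta n k = min (psi n k) (nu n k)"

end

theory Submission
  imports Defs
begin

lemma know_mono_suc: "know E d k i \<subseteq> know E d (Suc k) i"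
  by auto

lemma know_mono: "k \<le> k' \<Longrightarrow> know E d k i \<subseteq> know E d k' i"
proof (induction k' rule: dec_induct)
  case base then show ?case by simp
next
  case (step m) then show ?case using know_mono_suc[of E d m i] by blast
qed

lemma know_self: "d i \<in> know E d k i"
  using know_mono[of 0 k E d i] by auto

lemma know_sub:
  assumes "\<And>k. E k \<subseteq> {1..n} \<times> {1..n}" and "i \<in> {1..n}"
  shows "know E d k i \<subseteq> d ` {1..n}"
  using assms(2)
proof (induction k arbitrary: i)
  case 0 then show ?case by auto
next
  case (Suc k)
  have "\<And>j. (j, i) \<in> E k \<Longrightarrow> j \<in> {1..n}" using assms(1) by blast
  then show ?case using Suc by auto
qed

lemma cord_fwd:
  assumes cl: "\<And>a b. (a, b) \<in> E k \<Longrightarrow> a \<in> S \<Longrightarrow> b \<in> S"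
    and c: "input_cord n E k i cs" and j: "cs ! j \<in> S"
  shows "j \<le> l \<Longrightarrow> l < length cs \<Longrightarrow> cs ! l \<in> S"
proof (induction l rule: dec_induct)
  case base then show ?case using j by simp
next
  case (step m)
  have "(cs ! m, cs ! Suc m) \<in> E k" using c step unfolding input_cord_def by auto
  then show ?case using cl step by auto
qed

lemma cord_in:
  assumes cl: "\<And>a b. (a, b) \<in> E k \<Longrightarrow> a \<in> S \<Longrightarrow> b \<in> S"
    and c: "closed_input_cord n E k i cs" and i: "i \<in> S"
  shows "set cs \<subseteq> S"
proof
  fix x assume "x \<in> set cs"
  then obtain l where l: "l < length cs" "x = cs ! l" by (auto simp: in_set_conv_nth)
  have ne: "cs \<noteq> []" using c unfolding closed_input_cord_def input_cord_def by auto
  have "(i, cs ! 0) \<in> E k" using c ne unfolding closed_input_cord_def by (simp add: hd_conv_nth)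
  then have "cs ! 0 \<in> S" using cl i by blast
  moreover have ic: "input_cord n E k i cs" using c unfolding closed_input_cord_def by auto
  ultimately show "x \<in> S" using cord_fwd[OF cl ic, where j=0 and l=l] l by auto
qed

lemma cord_out:
  assumes cl: "\<And>a b. (a, b) \<in> E k \<Longrightarrow> a \<in> S \<Longrightarrow> b \<in> S"
    and c: "closed_input_cord n E k i cs" and i: "i \<notin> S"
  shows "set cs \<inter> S = {}"
proof (rule ccontr)
  assume "set cs \<inter> S \<noteq> {}"
  then obtain j where j: "j < length cs" "cs ! j \<in> S" by (auto simp: in_set_conv_nth)
  have ic: "input_cord n E k i cs" using c unfolding closed_input_cord_def by auto
  have ne: "cs \<noteq> []" using ic unfolding input_cord_def by auto
  have "cs ! (length cs - 1) \<in> S" using cord_fwd[OF cl ic j(2), where l="length cs - 1"] j by auto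
  then have "last cs \<in> S" using ne by (simp add: last_conv_nth)
  moreover have "(last cs, i) \<in> E k" using ic unfolding input_cord_def by auto
  ultimately show False using cl i by blast
qed

lemma arith_eta:
  fixes n k a b :: nat
  assumes "k \<le> n - 2" "n \<ge> 2" "int a > eta n k - 2" "int b > eta n k - 2"
    "a \<le> k" "b + 2 \<le> n - k"
  shows False
  using assms unfolding eta_def psi_def nu_def
  by (auto split: if_splits)

theorem theorem3:
  fixes n :: nat and E :: graph_seq and d :: "nat \<Rightarrow> real"
  assumes "n \<ge> 2"
    and "\<And>k. E k \<subseteq> {1..n} \<times> {1..n}"
    and "inj_on d {1..n}"
    and "\<And>k. k \<le> n - 2 \<Longrightarrow> contains_chi n E (eta n k) k"
  shows "(\<Sum>i\<in>{1..n}. card (know E d (n - 1) i)) = n ^ 2"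
proof -
  have grow: "k \<le> n - 1 \<Longrightarrow> k + 1 \<le> card {i\<in>{1..n}. d x \<in> know E d k i}"
    if x: "x \<in> {1..n}" for x k
  proof (induction k)
    case 0
    have "{x} \<subseteq> {i\<in>{1..n}. d x \<in> know E d 0 i}" using x by auto
    then show ?case using card_mono[of "{i\<in>{1..n}. d x \<in> know E d 0 i}" "{x}"] by auto
  next
    case (Suc k)
    define S where "S = {i\<in>{1..n}. d x \<in> know E d k i}"
    define S' where "S' = {i\<in>{1..n}. d x \<in> know E d (Suc k) i}"
    have fS': "finite S'" unfolding S'_def by auto
    have sub: "S \<subseteq> S'" unfolding S_def S'_def by auto
    have cS: "k + 1 \<le> card S" using Suc unfolding S_def by auto
    show ?case
    proof (cases "k + 2 \<le> card S")
      case True then show ?thesis using card_mono[OF fS' sub] unfolding S'_def by auto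
    next
      case False
      hence cS1: "card S = k + 1" using cS by auto
      have kn: "k \<le> n - 2" using Suc.prems by auto
      have "S \<noteq> S'"
      proof
        assume eq: "S = S'"
        have cl: "\<And>a b. (a, b) \<in> E k \<Longrightarrow> a \<in> S \<Longrightarrow> b \<in> S"
        proof -
          fix a b assume ab: "(a, b) \<in> E k" "a \<in> S"
          have "b \<in> {1..n}" using ab(1) assms(2) by blast
          moreover have "d x \<in> know E d (Suc k) b" using ab unfolding S_def by auto
          ultimately have "b \<in> S'" unfolding S'_def by auto
          then show "b \<in> S" using eq by simp
        qed
        have fS: "finite S" unfolding S_def by auto
        have Ssub: "S \<subseteq> {1..n}" unfolding S_def by auto
        have "S \<noteq> {}" using cS1 by auto
        then obtain i where i: "i \<in> S" by auto
        have "card S < card {1..n}" using cS1 kn assms(1) by simp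
        then have "S \<noteq> {1..n}" by auto
        then obtain i' where i': "i' \<in> {1..n}" "i' \<notin> S" using Ssub by blast
        have ch: "contains_chi n E (eta n k) k" using assms(4) kn .
        obtain cs where cs: "closed_input_cord n E k i cs" "int (length cs) > eta n k - 2"
          using ch i Ssub unfolding contains_chi_def in_chi_cycle_def by blast
        obtain cs' where cs': "closed_input_cord n E k i' cs'" "int (length cs') > eta n k - 2"
          using ch i' unfolding contains_chi_def in_chi_cycle_def by blast
        have d1: "distinct cs" "i \<notin> set cs" using cs(1)
          unfolding closed_input_cord_def input_cord_def by auto
        have d2: "distinct cs'" "i' \<notin> set cs'" "set cs' \<subseteq> {1..n}" using cs'(1)
          unfolding closed_input_cord_def input_cord_def by auto
        have ci: "set cs \<subseteq> S" by (rule cord_in[OF cl cs(1) i])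
        have "insert i (set cs) \<subseteq> S" using ci i by blast
        then have "card (insert i (set cs)) \<le> card S" using fS card_mono by blast
        then have a: "length cs \<le> k" using d1 cS1 by (simp add: distinct_card)
        have co: "set cs' \<inter> S = {}" by (rule cord_out[OF cl cs'(1) i'(2)])
        have "insert i' (set cs') \<subseteq> {1..n} - S" using co i' d2 by blast
        then have "card (insert i' (set cs')) \<le> card ({1..n} - S)" using card_mono by blast
        also have "\<dots> = n - (k + 1)" using Ssub cS1 fS by (simp add: card_Diff_subset)
        finally have b: "length cs' + 2 \<le> n - k" using d2 kn assms(1) by (simp add: distinct_card)
        show False using arith_eta[OF kn assms(1) cs(2) cs'(2) a b] .
      qed
      then have "S \<subset> S'" using sub by auto
      then have "card S < card S'" using fS' psubset_card_mono by blast
      then show ?thesis using cS1 unfolding S'_def by auto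
    qed
  qed
  have all: "know E d (n - 1) i = d ` {1..n}" if i: "i \<in> {1..n}" for i
  proof
    show "know E d (n - 1) i \<subseteq> d ` {1..n}" using know_sub[OF assms(2) i] .
    show "d ` {1..n} \<subseteq> know E d (n - 1) i"
    proof
      fix y assume "y \<in> d ` {1..n}"
      then obtain x where x: "x \<in> {1..n}" "y = d x" by auto
      let ?R = "{i\<in>{1..n}. d x \<in> know E d (n - 1) i}"
      have "n \<le> card ?R" using grow[OF x(1), of "n - 1"] assms(1) by auto
      moreover have "?R \<subseteq> {1..n}" by auto
      ultimately have "?R = {1..n}"
        using card_seteq[of "{1..n}" ?R] by simp
      then have "i \<in> ?R" using i by blast
      then show "y \<in> know E d (n - 1) i" using x by blast
    qed
  qed
  have "(\<Sum>i\<in>{1..n}. card (know E d (n - 1) i)) = (\<Sum>i\<in>{1..n}. n)"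
    using all assms(3) by (simp add: card_image)
  also have "\<dots> = n ^ 2" by (simp add: power2_eq_square)
  finally show ?thesis .
qed

end
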